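(* Let $\{(Y_i,X_i^T)\}_{i=1}^n$ be i.i.d. copies of $(Y,X^T)$ (law possibly depending on $n$) with $X$ supported on $\mathcal{X}$, $p_{1:k}=(p_1,\dots,p_k)^T$ functions on $\mathcal{X}$ ($k\ge2$, possibly depending on $n$), $\xi_k=\sup_{x\in\mathcal{X}}\|p_{1:k}(x)\|_2$, $\bar\beta=E[p_{1:k}(X)p_{1:k}(X)^T]^{-1}E[p_{1:k}(X)Y]$, $\omega=p_{1:k}(X)(Y-p_{1:k}(X)^T\bar\beta)$, and $\eta_1,\dots,\eta_n$ i.i.d. Rademacher variables independent of the data. Suppose that for constants $b>0$, $q\in[4,\infty)$ and finite constants $B_n\ge1$: (a) the eigenvalues of $E[\omega\omega^T]$ and $E[p_{1:k}(X)p_{1:k}(X)^T]$ are bounded above and bounded below away from $0$ uniformly over $n$; (b)(i) $E[Y^2]<\infty$; (ii) for every $j=1,\dots,k$ and $\kappa=1,2$: $E[|(E[\omega\omega^T]^{-1/2})_j\omega|^2]\ge b$, $E[|(E[\omega\omega^T]^{-1/2})_j\omega|^{2+\kappa}]\le B_n^\kappa$, and $E[\|E[\omega\omega^T]^{-1/2}\omega\|_\infty^q]\le B_n^q$; (iii) $B_n^2\log^7(nk)/n=o(1)$ and $B_n^2\log^3(nk)/n^{1-2/q}=o(1)$. Then $\max\{\|E_n[(\eta+1)\omega]\|_2,\|E_n[\omega]\|_2\}=O_P\bigl(\sqrt{\xi_k^2/n}\bigr)$.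
   Context: $E_n$ is the sample mean over observations, e.g. $E_n[(\eta+1)\omega]=\frac1n\sum_i(\eta_i+1)\omega_i$. $(M)_j$ denotes the $j$-th row of $M$; $\|\cdot\|_2$ is the Euclidean norm. *)

theory Defs
  imports "HOL-Probability.Probability" "Jordan_Normal_Form.Char_Poly"
    "Jordan_Normal_Form.Gauss_Jordan_Elimination"
begin

text \<open>The law of a generic copy (Y, X) is a probability measure L on
  real \<times> 'x; p j (j < k) are the basis functions p_1..p_k (0-indexed).\<close>

definition pvec :: "nat \<Rightarrow> (nat \<Rightarrow> 'x \<Rightarrow> real) \<Rightarrow> 'x \<Rightarrow> real vec" where
  "pvec k p x = vec k (\<lambda>j. p j x)"

definition gram :: "(real \<times> 'x) measure \<Rightarrow> nat \<Rightarrow> (nat \<Rightarrow> 'x \<Rightarrow> real) \<Rightarrow> real mat" where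
  "gram L k p = mat k k (\<lambda>(j,l). \<integral>z. p j (snd z) * p l (snd z) \<partial>L)"

definition betabar :: "(real \<times> 'x) measure \<Rightarrow> nat \<Rightarrow> (nat \<Rightarrow> 'x \<Rightarrow> real) \<Rightarrow> real vec" where
  "betabar L k p = the (mat_inverse (gram L k p)) *\<^sub>v vec k (\<lambda>j. \<integral>z. p j (snd z) * fst z \<partial>L)"

definition omega :: "(real \<times> 'x) measure \<Rightarrow> nat \<Rightarrow> (nat \<Rightarrow> 'x \<Rightarrow> real) \<Rightarrow> real \<times> 'x \<Rightarrow> real vec" where
  "omega L k p z = (fst z - pvec k p (snd z) \<bullet> betabar L k p) \<cdot>\<^sub>v pvec k p (snd z)"

definition Omega :: "(real \<times> 'x) measure \<Rightarrow> nat \<Rightarrow> (nat \<Rightarrow> 'x \<Rightarrow> real) \<Rightarrow> real mat" where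
  "Omega L k p = mat k k (\<lambda>(j,l). \<integral>z. vec_index (omega L k p z) j * vec_index (omega L k p z) l \<partial>L)"

definition inv_sqrt_mat :: "real mat \<Rightarrow> real mat" where
  "inv_sqrt_mat A = (THE S. S \<in> carrier_mat (dim_row A) (dim_row A) \<and> transpose_mat S = S
     \<and> (\<forall>e. eigenvalue S e \<longrightarrow> e > 0) \<and> S * S * A = 1\<^sub>m (dim_row A))"

definition vnorm2 :: "real vec \<Rightarrow> real" where
  "vnorm2 v = sqrt (\<Sum>j<dim_vec v. (vec_index v j)\<^sup>2)"

definition xi :: "'x set \<Rightarrow> nat \<Rightarrow> (nat \<Rightarrow> 'x \<Rightarrow> real) \<Rightarrow> ereal" where
  "xi Xs k p = (SUP x\<in>Xs. ereal (vnorm2 (pvec k p x)))"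

end

theory Submission imports Defs "Jordan_Normal_Form.Schur_Decomposition" begin

lemma trace_comm:
  fixes A B :: "'a::comm_ring_1 mat"
  assumes A: "A \<in> carrier_mat n m" and B: "B \<in> carrier_mat m n"
  shows "(\<Sum>i<n. (A * B) $$ (i,i)) = (\<Sum>j<m. (B * A) $$ (j,j))"
proof -
  have "(\<Sum>i<n. (A * B) $$ (i,i)) = (\<Sum>i<n. \<Sum>j<m. A $$ (i,j) * B $$ (j,i))"
    using A B by (auto simp: scalar_prod_def atLeast0LessThan intro!: sum.cong)
  also have "\<dots> = (\<Sum>j<m. \<Sum>i<n. B $$ (j,i) * A $$ (i,j))"
    by (subst sum.swap) (simp add: mult.commute)
  also have "\<dots> = (\<Sum>j<m. (B * A) $$ (j,j))"
    using A B by (auto simp: scalar_prod_def atLeast0LessThan intro!: sum.cong)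
  finally show ?thesis .
qed

lemma herm_eig_real:
  fixes A :: "real mat"
  assumes A: "A \<in> carrier_mat n n" and sym: "\<And>i j. i < n \<Longrightarrow> j < n \<Longrightarrow> A $$ (i,j) = A $$ (j,i)"
    and ev: "eigenvalue (map_mat complex_of_real A) a"
  shows "Im a = 0"
proof -
  let ?AC = "map_mat complex_of_real A"
  from ev obtain v where v: "v \<in> carrier_vec n" "v \<noteq> 0\<^sub>v n" "?AC *\<^sub>v v = a \<cdot>\<^sub>v v"
    using A unfolding eigenvalue_def eigenvector_def by auto
  define s where "s = (\<Sum>i<n. cnj (v$i) * (?AC *\<^sub>v v)$i)"
  define t where "t = (\<Sum>i<n. cnj (v$i) * v$i)"
  have s1: "s = a * t" unfolding s_def t_def using v by (simp add: sum_distrib_left mult.commute mult.left_commute)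
  have s2: "s = (\<Sum>i<n. \<Sum>j<n. cnj (v$i) * of_real (A$$(i,j)) * v$j)"
    unfolding s_def using v(1) A by (auto simp: scalar_prod_def atLeast0LessThan sum_distrib_left mult.assoc intro!: sum.cong)
  have "cnj s = (\<Sum>i<n. \<Sum>j<n. v$i * of_real (A$$(i,j)) * cnj (v$j))"
    unfolding s2 by (simp add: cnj_sum)
  also have "\<dots> = (\<Sum>j<n. \<Sum>i<n. v$i * of_real (A$$(i,j)) * cnj (v$j))"
    by (rule sum.swap)
  also have "\<dots> = s" unfolding s2 using sym by (auto intro!: sum.cong simp: mult.commute mult.left_commute)
  finally have "Im s = 0" by (metis cnj.simps(2) neg_equal_zero)
  have tr: "t = of_real (\<Sum>i<n. (cmod (v$i))\<^sup>2)" unfolding t_def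
    by (simp add: complex_norm_square[symmetric] mult.commute del: of_real_power)
  obtain i where i: "i < n" "v$i \<noteq> 0" using v by (metis eq_vecI carrier_vecD index_zero_vec)
  have "(\<Sum>i<n. (cmod (v$i))\<^sup>2) > 0"
    using i by (intro sum_pos2[of _ i]) auto
  with \<open>Im s = 0\<close> s1 tr show ?thesis by simp
qed

lemma trace_bounds:
  fixes A :: "real mat"
  assumes A: "A \<in> carrier_mat n n" and sym: "\<And>i j. i < n \<Longrightarrow> j < n \<Longrightarrow> A $$ (i,j) = A $$ (j,i)"
    and eig: "\<And>e. eigenvalue A e \<Longrightarrow> c \<le> e \<and> e \<le> C"
  shows "real n * c \<le> (\<Sum>i<n. A $$ (i,i)) \<and> (\<Sum>i<n. A $$ (i,i)) \<le> real n * C"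
proof -
  let ?AC = "map_mat complex_of_real A"
  have AC: "?AC \<in> carrier_mat n n" using A by simp
  obtain as where cp: "char_poly ?AC = (\<Prod>a\<leftarrow>as. [:- a, 1:])" and len: "length as = n"
    using char_poly_factorized[OF AC] by blast
  obtain B P Q where sd: "schur_decomposition ?AC as = (B,P,Q)" by (cases "schur_decomposition ?AC as") auto
  from schur_decomposition[OF AC cp sd] have sim: "similar_mat_wit ?AC B P Q" and dg: "diag_mat B = as"
    by auto
  note sw = similar_mat_witD2[OF AC sim]
  have Bc: "B \<in> carrier_mat n n" and Pc: "P \<in> carrier_mat n n" and Qc: "Q \<in> carrier_mat n n"
    and QP: "Q * P = 1\<^sub>m n" and eq: "?AC = P * B * Q" using sw by blast+
  have "(\<Sum>i<n. ?AC $$ (i,i)) = (\<Sum>i<n. ((P * B) * Q) $$ (i,i))" using eq by simp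
  also have "\<dots> = (\<Sum>i<n. (Q * (P * B)) $$ (i,i))"
    by (rule trace_comm[OF mult_carrier_mat[OF Pc Bc] Qc])
  also have "Q * (P * B) = B"
    by (simp add: assoc_mult_mat[symmetric, OF Qc Pc Bc] QP left_mult_one_mat[OF Bc])
  finally have tr: "(\<Sum>i<n. ?AC $$ (i,i)) = (\<Sum>i<n. B $$ (i,i))" .
  have "(\<Sum>i<n. B $$ (i,i)) = sum_list as"
  proof -
    have "as = map (\<lambda>i. B $$ (i,i)) [0..<n]" using dg Bc unfolding diag_mat_def by auto
    thus ?thesis by (simp add: sum_set_upt_conv_sum_list_nat[symmetric] atLeast0LessThan)
  qed
  with tr have trc: "complex_of_real (\<Sum>i<n. A $$ (i,i)) = sum_list as" using A by simp
  have bnd: "c \<le> Re a \<and> Re a \<le> C" if a: "a \<in> set as" for a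
  proof -
    have "poly (char_poly ?AC) a = 0" unfolding cp poly_prod_list
      using a by (simp add: prod_list_zero_iff o_def)
    hence ev: "eigenvalue ?AC a" using eigenvalue_root_char_poly[OF AC] by simp
    have im: "Im a = 0" by (rule herm_eig_real[OF A sym ev])
    then have aa: "a = complex_of_real (Re a)" by (simp add: complex_eq_iff)
    have "poly (char_poly ?AC) a = complex_of_real (poly (char_poly A) (Re a))"
      apply (subst of_real_hom.char_poly_hom[OF A])
      apply (subst aa) by (simp add: of_real_hom.poly_map_poly)
    with \<open>poly (char_poly ?AC) a = 0\<close> have "poly (char_poly A) (Re a) = 0" by simp
    hence "eigenvalue A (Re a)" using eigenvalue_root_char_poly[OF A] by simp
    thus ?thesis using eig by blast
  qed
  have "(\<Sum>i<n. A $$ (i,i)) = Re (sum_list as)" using trc by (metis Re_complex_of_real)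
  also have "\<dots> = sum_list (map Re as)" by (induct as) auto
  finally have tre: "(\<Sum>i<n. A $$ (i,i)) = sum_list (map Re as)" .
  have "sum_list (map (\<lambda>_. c) as) \<le> sum_list (map Re as)"
    by (rule sum_list_mono) (use bnd in auto)
  moreover have "sum_list (map Re as) \<le> sum_list (map (\<lambda>_. C) as)"
    by (rule sum_list_mono) (use bnd in auto)
  ultimately show ?thesis using tre len by (simp add: sum_list_triv)
qed

lemma gram_inv:
  fixes G :: "real mat"
  assumes G: "G \<in> carrier_mat n n" and ne: "\<not> eigenvalue G 0"
  shows "\<exists>B. mat_inverse G = Some B \<and> G * B = 1\<^sub>m n \<and> B \<in> carrier_mat n n"
proof -
  have "det G \<noteq> 0"
  proof
    assume "det G = 0"
    then obtain v where v: "v \<in> carrier_vec n" "v \<noteq> 0\<^sub>v n" "G *\<^sub>v v = 0\<^sub>v n"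
      using det_0_iff_vec_prod_zero_field[OF G] by blast
    have "eigenvector G v 0" unfolding eigenvector_def using v G by auto
    with ne show False unfolding eigenvalue_def by blast
  qed
  from det_non_zero_imp_unit[OF G this, of "()"] have U: "G \<in> Units (ring_mat TYPE(real) n ())" .
  show ?thesis
  proof (cases "mat_inverse G")
    case None
    with mat_inverse(1)[OF G, of "()"] U show ?thesis by blast
  next
    case (Some B)
    with mat_inverse(2)[OF G Some] show ?thesis by blast
  qed
qed

lemma (in prob_space) sq_sum_indep:
  fixes Z :: "nat \<Rightarrow> 'a \<Rightarrow> real"
  assumes fin: "finite I"
   and int: "\<And>i. i\<in>I \<Longrightarrow> integrable M (Z i)"
   and int2: "\<And>i. i\<in>I \<Longrightarrow> integrable M (\<lambda>w. (Z i w)\<^sup>2)"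
   and mean: "\<And>i. i\<in>I \<Longrightarrow> (\<integral>w. Z i w \<partial>M) = 0"
   and ind: "\<And>i l. i\<in>I \<Longrightarrow> l\<in>I \<Longrightarrow> i\<noteq>l \<Longrightarrow> indep_var borel (Z i) borel (Z l)"
  shows "integrable M (\<lambda>w. (\<Sum>i\<in>I. Z i w)\<^sup>2) \<and> (\<integral>w. (\<Sum>i\<in>I. Z i w)\<^sup>2 \<partial>M) = (\<Sum>i\<in>I. \<integral>w. (Z i w)\<^sup>2 \<partial>M)"
proof -
  have eq: "(\<lambda>w. (\<Sum>i\<in>I. Z i w)\<^sup>2) = (\<lambda>w. \<Sum>i\<in>I. \<Sum>l\<in>I. Z i w * Z l w)"
    by (simp add: power2_eq_square sum_product)
  have ti: "integrable M (\<lambda>w. Z i w * Z l w)" if "i \<in> I" "l \<in> I" for i l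
  proof (cases "i = l")
    case True then show ?thesis using int2[OF that(1)] by (simp add: power2_eq_square)
  next
    case False then show ?thesis using ind[OF that False] int that by (intro indep_var_integrable) auto
  qed
  have tv: "(\<integral>w. Z i w * Z l w \<partial>M) = (if i = l then \<integral>w. (Z i w)\<^sup>2 \<partial>M else 0)" if "i \<in> I" "l \<in> I" for i l
  proof (cases "i = l")
    case True then show ?thesis by (simp add: power2_eq_square)
  next
    case False then show ?thesis using ind[OF that False] int that mean
      by (subst indep_var_lebesgue_integral) auto
  qed
  have "integrable M (\<lambda>w. \<Sum>i\<in>I. \<Sum>l\<in>I. Z i w * Z l w)"
    using ti by (auto intro!: integrable_sum)
  moreover have "(\<integral>w. (\<Sum>i\<in>I. \<Sum>l\<in>I. Z i w * Z l w) \<partial>M) = (\<Sum>i\<in>I. \<Sum>l\<in>I. \<integral>w. Z i w * Z l w \<partial>M)"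
    using ti by (simp add: integrable_sum)
  moreover have "\<dots> = (\<Sum>i\<in>I. \<integral>w. (Z i w)\<^sup>2 \<partial>M)"
  proof -
    have "(\<Sum>i\<in>I. \<Sum>l\<in>I. \<integral>w. Z i w * Z l w \<partial>M) = (\<Sum>i\<in>I. \<Sum>l\<in>I. (if i = l then \<integral>w. (Z i w)\<^sup>2 \<partial>M else 0))"
      using tv by (intro sum.cong refl) auto
    also have "\<dots> = (\<Sum>i\<in>I. \<integral>w. (Z i w)\<^sup>2 \<partial>M)"
      using fin by (simp add: sum.delta)
    finally show ?thesis .
  qed
  ultimately show ?thesis unfolding eq by simp
qed

lemma abs_mult_le_sq: "\<bar>(a::real) * b\<bar> \<le> a * a + b\<^sup>2"
proof -
  have "0 \<le> (\<bar>a\<bar> - \<bar>b\<bar>)\<^sup>2" by simp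
  hence "2 * \<bar>a\<bar> * \<bar>b\<bar> \<le> a * a + b\<^sup>2" by (simp add: power2_eq_square algebra_simps abs_mult_self_eq)
  moreover have "0 \<le> \<bar>a\<bar> * \<bar>b\<bar>" by simp
  ultimately show ?thesis unfolding abs_mult by linarith
qed

lemma abs_le_1_sq: "\<bar>(a::real)\<bar> \<le> 1 + a\<^sup>2"
  using abs_mult_le_sq[of 1 a] by simp

context
  fixes L :: "(real \<times> 'x) measure" and Sx :: "'x measure" and k :: nat
    and p :: "nat \<Rightarrow> 'x \<Rightarrow> real" and c Cc :: real
  assumes Lp: "prob_space L" and sL: "sets L = sets (borel \<Otimes>\<^sub>M Sx)" and k1: "k \<ge> 1"
   and p_meas: "\<And>j. j < k \<Longrightarrow> p j \<in> borel_measurable Sx"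
   and int_pp: "\<And>j l. j < k \<Longrightarrow> l < k \<Longrightarrow> integrable L (\<lambda>z. p j (snd z) * p l (snd z))"
   and int_ww: "\<And>j l. j < k \<Longrightarrow> l < k \<Longrightarrow>
                   integrable L (\<lambda>z. vec_index (omega L k p z) j * vec_index (omega L k p z) l)"
   and Y2: "integrable L (\<lambda>z. (fst z)\<^sup>2)"
   and eig: "\<And>e. eigenvalue (Omega L k p) e \<or> eigenvalue (gram L k p) e \<Longrightarrow> c \<le> e \<and> e \<le> Cc"
   and c0: "c > 0"
begin

lemma bmL: "borel_measurable L = borel_measurable (borel \<Otimes>\<^sub>M Sx)"
  using sL by (rule measurable_cong_sets) auto

lemma pm: assumes "j < k" shows "(\<lambda>z. p j (snd z)) \<in> borel_measurable (borel \<Otimes>\<^sub>M Sx)"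
  using measurable_compose[OF measurable_snd p_meas[OF assms]] .

lemma Gc: "gram L k p \<in> carrier_mat k k" unfolding gram_def by simp

lemma Gsym: "i < k \<Longrightarrow> j < k \<Longrightarrow> gram L k p $$ (i,j) = gram L k p $$ (j,i)"
  unfolding gram_def by (simp add: mult.commute)

lemma Oc: "Omega L k p \<in> carrier_mat k k" unfolding Omega_def by simp

lemma Osym: "i < k \<Longrightarrow> j < k \<Longrightarrow> Omega L k p $$ (i,j) = Omega L k p $$ (j,i)"
  unfolding Omega_def by (simp add: mult.commute)

definition bv where "bv = vec k (\<lambda>j. \<integral>z. p j (snd z) * fst z \<partial>L)"

lemma beta_facts: "dim_vec (betabar L k p) = k \<and> gram L k p *\<^sub>v betabar L k p = bv"
proof -
  have "\<not> eigenvalue (gram L k p) 0" using eig[of 0] c0 by auto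
  from gram_inv[OF Gc this] obtain B where B: "mat_inverse (gram L k p) = Some B"
    "gram L k p * B = 1\<^sub>m k" "B \<in> carrier_mat k k" by blast
  have be: "betabar L k p = B *\<^sub>v bv" unfolding betabar_def bv_def B by simp
  have "gram L k p *\<^sub>v (B *\<^sub>v bv) = (gram L k p * B) *\<^sub>v bv"
    by (rule assoc_mult_mat_vec[symmetric, OF Gc B(3)]) (simp add: bv_def)
  also have "\<dots> = bv" using B(2) by (simp add: bv_def)
  finally show ?thesis using be B(3) by simp
qed

lemma om_eq: "j < k \<Longrightarrow> omega L k p z $ j =
   p j (snd z) * fst z - (\<Sum>l<k. p j (snd z) * p l (snd z) * betabar L k p $ l)"
  using beta_facts unfolding omega_def pvec_def scalar_prod_def
  by (simp add: atLeast0LessThan sum_distrib_left algebra_simps)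

lemma om_meas: "j < k \<Longrightarrow> (\<lambda>z. omega L k p z $ j) \<in> borel_measurable (borel \<Otimes>\<^sub>M Sx)"
  apply (subst om_eq, assumption)
  apply (intro borel_measurable_diff borel_measurable_times borel_measurable_sum pm measurable_fst''
         borel_measurable_const measurable_ident_sets)
  by auto

lemma om_measL: assumes "j < k" shows "(\<lambda>z. omega L k p z $ j) \<in> borel_measurable L"
  using om_meas[OF assms] unfolding bmL .

lemma pY_int: "j < k \<Longrightarrow> integrable L (\<lambda>z. p j (snd z) * fst z)"
proof -
  assume j: "j < k"
  have "integrable L (\<lambda>z. p j (snd z) * p j (snd z) + (fst z)\<^sup>2)"
    using int_pp[OF j j] Y2 by simp
  moreover have "(\<lambda>z. p j (snd z) * fst z) \<in> borel_measurable L"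
    unfolding bmL using pm[OF j] by measurable
  ultimately show ?thesis
    by (rule Bochner_Integration.integrable_bound) (auto intro!: AE_I2 simp: abs_mult_le_sq order_trans[OF abs_mult_le_sq])
qed

lemma om_int2: "j < k \<Longrightarrow> integrable L (\<lambda>z. (omega L k p z $ j)\<^sup>2)"
  using int_ww[of j j] by (simp add: power2_eq_square)

lemma om_int: "j < k \<Longrightarrow> integrable L (\<lambda>z. omega L k p z $ j)"
proof -
  assume j: "j < k"
  interpret prob_space L by (rule Lp)
  have "integrable L (\<lambda>z. 1 + (omega L k p z $ j)\<^sup>2)"
    using om_int2[OF j] by simp
  then show ?thesis
    by (rule Bochner_Integration.integrable_bound) (use om_measL[OF j] abs_le_1_sq in \<open>auto intro!: AE_I2\<close>)
qed

lemma om_mean: "j < k \<Longrightarrow> (\<integral>z. omega L k p z $ j \<partial>L) = 0"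
proof -
  assume j: "j < k"
  let ?b = "betabar L k p"
  have ints: "\<And>l. l < k \<Longrightarrow> integrable L (\<lambda>z. p j (snd z) * p l (snd z) * ?b $ l)"
    using int_pp j by simp
  have "(\<integral>z. omega L k p z $ j \<partial>L) =
     (\<integral>z. p j (snd z) * fst z - (\<Sum>l<k. p j (snd z) * p l (snd z) * ?b $ l) \<partial>L)"
    using om_eq[OF j] by simp
  also have "\<dots> = (\<integral>z. p j (snd z) * fst z \<partial>L) - (\<Sum>l<k. (\<integral>z. p j (snd z) * p l (snd z) \<partial>L) * ?b $ l)"
  proof -
    have "(\<integral>z. p j (snd z) * fst z - (\<Sum>l<k. p j (snd z) * p l (snd z) * ?b $ l) \<partial>L)
      = (\<integral>z. p j (snd z) * fst z \<partial>L) - (\<integral>z. (\<Sum>l<k. p j (snd z) * p l (snd z) * ?b $ l) \<partial>L)"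
      by (rule Bochner_Integration.integral_diff[OF pY_int[OF j]]) (use ints in \<open>auto intro!: integrable_sum\<close>)
    also have "(\<integral>z. (\<Sum>l<k. p j (snd z) * p l (snd z) * ?b $ l) \<partial>L)
       = (\<Sum>l<k. \<integral>z. p j (snd z) * p l (snd z) * ?b $ l \<partial>L)"
      by (rule Bochner_Integration.integral_sum) (use ints in auto)
    also have "\<dots> = (\<Sum>l<k. (\<integral>z. p j (snd z) * p l (snd z) \<partial>L) * ?b $ l)"
      by (simp add: integral_mult_left_zero)
    finally show ?thesis .
  qed
  also have "(\<Sum>l<k. (\<integral>z. p j (snd z) * p l (snd z) \<partial>L) * ?b $ l) = (gram L k p *\<^sub>v ?b) $ j"
    using j conjunct1[OF beta_facts] unfolding gram_def by (simp add: scalar_prod_def atLeast0LessThan)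
  also have "\<dots> = bv $ j" using beta_facts by simp
  also have "\<dots> = (\<integral>z. p j (snd z) * fst z \<partial>L)" using j by (simp add: bv_def)
  finally show ?thesis by simp
qed

lemma trace_Om: "(\<Sum>j<k. \<integral>z. (omega L k p z $ j)\<^sup>2 \<partial>L) \<le> real k * Cc"
proof -
  have "(\<Sum>j<k. \<integral>z. (omega L k p z $ j)\<^sup>2 \<partial>L) = (\<Sum>j<k. Omega L k p $$ (j,j))"
    unfolding Omega_def by (simp add: power2_eq_square)
  also have "\<dots> \<le> real k * Cc"
    using trace_bounds[OF Oc Osym, of c Cc] eig by blast
  finally show ?thesis .
qed

lemma trace_G: "real k * c \<le> (\<Sum>j<k. \<integral>z. p j (snd z) * p j (snd z) \<partial>L)"
proof -
  have "(\<Sum>j<k. \<integral>z. p j (snd z) * p j (snd z) \<partial>L) = (\<Sum>j<k. gram L k p $$ (j,j))"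
    unfolding gram_def by simp
  moreover have "real k * c \<le> (\<Sum>j<k. gram L k p $$ (j,j))"
    using trace_bounds[OF Gc Gsym, of c Cc] eig by blast
  ultimately show ?thesis by simp
qed

lemma xi_bound:
  assumes supp: "AE z in L. snd z \<in> Xs" and fin: "xi Xs k p \<noteq> \<infinity>"
  shows "\<exists>r. xi Xs k p = ereal r \<and> 0 \<le> r \<and> (\<Sum>j<k. \<integral>z. p j (snd z) * p j (snd z) \<partial>L) \<le> r\<^sup>2"
proof -
  interpret prob_space L by (rule Lp)
  have up: "ereal (sqrt (\<Sum>j<k. p j x * p j x)) \<le> xi Xs k p" if "x \<in> Xs" for x
  proof -
    have "vnorm2 (pvec k p x) = sqrt (\<Sum>j<k. p j x * p j x)"
      unfolding vnorm2_def pvec_def by (simp add: power2_eq_square)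
    moreover have "ereal (vnorm2 (pvec k p x)) \<le> xi Xs k p"
      unfolding xi_def using that by (rule SUP_upper)
    ultimately show ?thesis by simp
  qed
  have ae: "AE z in L. ereal (sqrt (\<Sum>j<k. p j (snd z) * p j (snd z))) \<le> xi Xs k p"
    using supp by eventually_elim (use up in auto)
  show ?thesis
  proof (cases "xi Xs k p")
    case (real r)
    have "AE z in L. 0 \<le> r" using ae
    proof eventually_elim
      case (elim z)
      hence "sqrt (\<Sum>j<k. p j (snd z) * p j (snd z)) \<le> r" by (simp add: real)
      moreover have "0 \<le> sqrt (\<Sum>j<k. p j (snd z) * p j (snd z))" by (simp add: sum_nonneg)
      ultimately show ?case by linarith
    qed
    hence r0: "0 \<le> r" by simp
    have ae2: "AE z in L. (\<Sum>j<k. p j (snd z) * p j (snd z)) \<le> r\<^sup>2"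
      using ae
    proof eventually_elim
      case (elim z)
      hence "sqrt (\<Sum>j<k. p j (snd z) * p j (snd z)) \<le> r" by (simp add: real)
      thus ?case by (rule sqrt_le_D)
    qed
    have "(\<Sum>j<k. \<integral>z. p j (snd z) * p j (snd z) \<partial>L) = (\<integral>z. (\<Sum>j<k. p j (snd z) * p j (snd z)) \<partial>L)"
      by (rule Bochner_Integration.integral_sum[symmetric]) (use int_pp in auto)
    also have "\<dots> \<le> (\<integral>z. r\<^sup>2 \<partial>L)"
      by (rule integral_mono_AE) (use int_pp ae2 in \<open>auto intro!: integrable_sum\<close>)
    also have "\<dots> = r\<^sup>2" by (simp add: prob_space)
    finally show ?thesis using real r0 by blast
  next
    case PInf with fin show ?thesis by simp
  next
    case MInf
    have "AE z in L. False" using ae by eventually_elim (simp add: MInf)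
    thus ?thesis by simp
  qed
qed

end


lemma (in prob_space) indep_pair_from_vars:
  assumes ind: "indep_vars (\<lambda>_. N) Z I" and il: "i \<in> I" "l \<in> I" "i \<noteq> l"
    and h: "h \<in> borel_measurable N"
  shows "indep_var borel (\<lambda>w. h (Z i w)) borel (\<lambda>w. h (Z l w))"
proof -
  have "indep_var (PiM {i} (\<lambda>_. N)) (\<lambda>w. restrict (\<lambda>i. Z i w) {i}) (PiM {l} (\<lambda>_. N)) (\<lambda>w. restrict (\<lambda>i. Z i w) {l})"
    by (rule indep_var_restrict[OF ind]) (use il in auto)
  moreover have "(\<lambda>f. h (f i)) \<in> borel_measurable (PiM {i} (\<lambda>_. N))"
    by (rule measurable_compose[OF measurable_component_singleton[of i "{i}" "\<lambda>_. N"] h]) simp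
  moreover have "(\<lambda>f. h (f l)) \<in> borel_measurable (PiM {l} (\<lambda>_. N))"
    by (rule measurable_compose[OF measurable_component_singleton[of l "{l}" "\<lambda>_. N"] h]) simp
  ultimately have "indep_var borel ((\<lambda>f. h (f i)) \<circ> (\<lambda>w. restrict (\<lambda>i. Z i w) {i}))
                     borel ((\<lambda>f. h (f l)) \<circ> (\<lambda>w. restrict (\<lambda>i. Z i w) {l}))"
    by (rule indep_var_compose)
  moreover have "((\<lambda>f. h (f i)) \<circ> (\<lambda>w. restrict (\<lambda>i. Z i w) {i})) = (\<lambda>w. h (Z i w))" by (simp add: fun_eq_iff)
  moreover have "((\<lambda>f. h (f l)) \<circ> (\<lambda>w. restrict (\<lambda>i. Z i w) {l})) = (\<lambda>w. h (Z l w))" by (simp add: fun_eq_iff)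
  ultimately show ?thesis by simp
qed

lemma (in prob_space) rad_AE:
  fixes e :: "'a \<Rightarrow> real"
  assumes em: "e \<in> borel_measurable M"
    and r1: "measure M {w \<in> space M. e w = 1} = 1/2"
    and r2: "measure M {w \<in> space M. e w = -1} = 1/2"
  shows "AE w in M. e w = 1 \<or> e w = -1"
proof -
  have s: "{w \<in> space M. e w = a} \<in> events" for a
  proof -
    have "{w \<in> space M. e w = a} = e -` {a} \<inter> space M" by auto
    moreover have "e -` {a} \<inter> space M \<in> events"
      by (rule measurable_sets[OF em]) (rule borel_closed, simp)
    ultimately show ?thesis by simp
  qed
  note s1 = s[of 1] and s2 = s[of "-1"]
  have "prob ({w \<in> space M. e w = 1} \<union> {w \<in> space M. e w = -1}) = 1"
    using finite_measure_Union[OF s1 s2] r1 r2 by force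
  then have "AE w in M. w \<in> {w \<in> space M. e w = 1} \<union> {w \<in> space M. e w = -1}"
    by (rule AE_prob_1)
  then show ?thesis by eventually_elim auto
qed


lemma vnorm2_vec_div:
  assumes "n > 0"
  shows "vnorm2 (vec k (\<lambda>j. g j / real n)) = sqrt (\<Sum>j<k. (g j)\<^sup>2) / real n"
proof -
  have "vnorm2 (vec k (\<lambda>j. g j / real n)) = sqrt ((\<Sum>j<k. (g j)\<^sup>2) / (real n)\<^sup>2)"
    unfolding vnorm2_def by (simp add: power_divide sum_divide_distrib)
  also have "\<dots> = sqrt (\<Sum>j<k. (g j)\<^sup>2) / real n"
    using assms by (simp add: real_sqrt_divide)
  finally show ?thesis .
qed

lemma key_one:
  fixes x A :: real
  assumes x0: "0 \<le> x" and lt: "x < sqrt (real n) * (sqrt A / real n)" and A0: "0 \<le> A" and n0: "n > 0"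
  shows "x\<^sup>2 * real n \<le> A"
proof -
  let ?y = "sqrt (real n) * (sqrt A / real n)"
  have "x\<^sup>2 < ?y\<^sup>2" using x0 lt by (intro power_strict_mono) auto
  also have "?y\<^sup>2 = A / real n"
  proof -
    have "?y\<^sup>2 = (sqrt (real n))\<^sup>2 * (sqrt A)\<^sup>2 / (real n)\<^sup>2"
      by (simp add: power_mult_distrib power_divide)
    also have "\<dots> = real n * A / (real n)\<^sup>2" using A0 by simp
    also have "\<dots> = A / real n" using n0 by (simp add: power2_eq_square)
    finally show ?thesis .
  qed
  finally have "x\<^sup>2 < A / real n" .
  then show ?thesis using n0 by (simp add: pos_less_divide_eq less_imp_le)
qed

lemma key_ineq:
  fixes x A B :: real
  assumes x0: "0 \<le> x" and lt: "x < sqrt (real n) * max (sqrt A / real n) (sqrt B / real n)"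
    and A0: "0 \<le> A" and B0: "0 \<le> B" and n0: "n > 0"
  shows "x\<^sup>2 * real n \<le> A + B"
proof (cases "sqrt A / real n \<le> sqrt B / real n")
  case True
  then have "x\<^sup>2 * real n \<le> B" using key_one[OF x0 _ B0 n0] lt by (simp add: max_def)
  then show ?thesis using A0 by linarith
next
  case False
  then have "x\<^sup>2 * real n \<le> A" using key_one[OF x0 _ A0 n0] lt by (simp add: max_def)
  then show ?thesis using B0 by linarith
qed

lemma per_n:
  fixes M :: "'a measure" and Sx :: "'x measure" and L :: "(real \<times> 'x) measure"
    and Xs :: "'x set" and k n :: nat and p :: "nat \<Rightarrow> 'x \<Rightarrow> real"
    and Y :: "nat \<Rightarrow> 'a \<Rightarrow> real" and X :: "nat \<Rightarrow> 'a \<Rightarrow> 'x" and eta :: "nat \<Rightarrow> 'a \<Rightarrow> real"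
    and c Cc C :: real
  assumes prob: "prob_space M" and n1: "n \<ge> 1"
    and data_meas: "\<And>i. i < n \<Longrightarrow> (\<lambda>w. (Y i w, X i w)) \<in> measurable M (borel \<Otimes>\<^sub>M Sx)"
    and data_law: "\<And>i. i < n \<Longrightarrow> distr M (borel \<Otimes>\<^sub>M Sx) (\<lambda>w. (Y i w, X i w)) = L"
    and eta_meas: "\<And>i. i < n \<Longrightarrow> eta i \<in> borel_measurable M"
    and eta_rad1: "\<And>i. i < n \<Longrightarrow> measure M {w \<in> space M. eta i w = 1} = 1/2"
    and eta_rad2: "\<And>i. i < n \<Longrightarrow> measure M {w \<in> space M. eta i w = -1} = 1/2"
    and indep_obs: "prob_space.indep_vars M (\<lambda>i. (borel \<Otimes>\<^sub>M Sx) \<Otimes>\<^sub>M borel)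
                      (\<lambda>i w. ((Y i w, X i w), eta i w)) {..<n}"
    and indep_eta: "\<And>i. i < n \<Longrightarrow>
                      distr M ((borel \<Otimes>\<^sub>M Sx) \<Otimes>\<^sub>M borel) (\<lambda>w. ((Y i w, X i w), eta i w))
                      = L \<Otimes>\<^sub>M distr M borel (eta i)"
    and support: "AE z in L. snd z \<in> Xs"
    and k1: "k \<ge> 1"
    and p_meas: "\<And>j. j < k \<Longrightarrow> p j \<in> borel_measurable Sx"
    and int_pp: "\<And>j l. j < k \<Longrightarrow> l < k \<Longrightarrow> integrable L (\<lambda>z. p j (snd z) * p l (snd z))"
    and int_ww: "\<And>j l. j < k \<Longrightarrow> l < k \<Longrightarrow>
                   integrable L (\<lambda>z. vec_index (omega L k p z) j * vec_index (omega L k p z) l)"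
    and Y2: "integrable L (\<lambda>z. (fst z)\<^sup>2)"
    and eig: "\<And>e. eigenvalue (Omega L k p) e \<or> eigenvalue (gram L k p) e \<Longrightarrow> c \<le> e \<and> e \<le> Cc"
    and c0: "c > 0" and C0: "C > 0"
  shows "measure M {w \<in> space M.
             ereal C * xi Xs k p <
             ereal (sqrt (real n) *
               max (vnorm2 (vec k (\<lambda>j. (\<Sum>i<n. (eta i w + 1)
                          * vec_index (omega L k p (Y i w, X i w)) j) / real n)))
                   (vnorm2 (vec k (\<lambda>j. (\<Sum>i<n.
                          vec_index (omega L k p (Y i w, X i w)) j) / real n))))}
         \<le> 5 * Cc / (c * C\<^sup>2)"
proof -
  interpret prob_space M by (rule prob)
  have L0: "L = distr M (borel \<Otimes>\<^sub>M Sx) (\<lambda>w. (Y 0 w, X 0 w))" using data_law[of 0] n1 by simp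
  have Lp: "prob_space L" unfolding L0 by (rule prob_space_distr[OF data_meas]) (use n1 in simp)
  have sL: "sets L = sets (borel \<Otimes>\<^sub>M Sx)" unfolding L0 by simp
  note Lprems = Lp sL k1 p_meas int_pp int_ww Y2 eig c0
  define om where "om j z = omega L k p z $ j" for j z
  define D where "D = (\<Sum>j<k. \<integral>z. (om j z)\<^sup>2 \<partial>L)"
  have om_meas': "\<And>j. j < k \<Longrightarrow> om j \<in> borel_measurable (borel \<Otimes>\<^sub>M Sx)"
    unfolding om_def using om_meas[OF Lprems] by blast
  have om_int': "\<And>j. j < k \<Longrightarrow> integrable L (om j)"
    unfolding om_def using om_int[OF Lprems] by blast
  have om_int2': "\<And>j. j < k \<Longrightarrow> integrable L (\<lambda>z. (om j z)\<^sup>2)"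
    unfolding om_def using om_int2[OF Lprems] by blast
  have om_mean': "\<And>j. j < k \<Longrightarrow> (\<integral>z. om j z \<partial>L) = 0"
    unfolding om_def using om_mean[OF Lprems] by blast
  have DC: "D \<le> real k * Cc" unfolding D_def om_def using trace_Om[OF Lprems] .
  have D0: "0 \<le> D" unfolding D_def by (intro sum_nonneg integral_nonneg_AE) auto
  have Cc0: "0 \<le> Cc"
  proof (rule ccontr)
    assume "\<not> 0 \<le> Cc"
    then have "real k * Cc < 0" using k1 by (simp add: mult_pos_neg)
    then show False using DC D0 by linarith
  qed
  define W where "W i j w = om j (Y i w, X i w)" for i j w
  define V where "V i j w = (eta i w + 1) * W i j w" for i j w
  have Wm: "W i j \<in> borel_measurable M" if "i < n" "j < k" for i j
    unfolding W_def using measurable_compose[OF data_meas[OF that(1)] om_meas'[OF that(2)]] .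
  have om2m: "(\<lambda>z. (om j z)\<^sup>2) \<in> borel_measurable (borel \<Otimes>\<^sub>M Sx)" if "j < k" for j
    using om_meas'[OF that] by (intro borel_measurable_power)
  have W_int: "integrable M (W i j)" if "i < n" "j < k" for i j
    using integrable_distr_eq[OF data_meas[OF that(1)] om_meas'[OF that(2)]] om_int'[OF that(2)]
      data_law[OF that(1)] unfolding W_def by simp
  have W_int2: "integrable M (\<lambda>w. (W i j w)\<^sup>2)" if "i < n" "j < k" for i j
    using integrable_distr_eq[OF data_meas[OF that(1)] om2m[OF that(2)]] om_int2'[OF that(2)]
      data_law[OF that(1)] unfolding W_def by simp
  have W_mean: "(\<integral>w. W i j w \<partial>M) = 0" if "i < n" "j < k" for i j
    using integral_distr[OF data_meas[OF that(1)] om_meas'[OF that(2)]] om_mean'[OF that(2)]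
      data_law[OF that(1)] unfolding W_def by simp
  have W_sq: "(\<integral>w. (W i j w)\<^sup>2 \<partial>M) = (\<integral>z. (om j z)\<^sup>2 \<partial>L)" if "i < n" "j < k" for i j
    using integral_distr[OF data_meas[OF that(1)] om2m[OF that(2)]]
      data_law[OF that(1)] unfolding W_def by simp
  have eta_AE: "AE w in M. eta i w = 1 \<or> eta i w = -1" if "i < n" for i
    by (rule rad_AE[OF eta_meas eta_rad1 eta_rad2]) (use that in auto)
  have eta_int: "integrable M (eta i)" if "i < n" for i
  proof -
    have "integrable M (\<lambda>w. 1::real)" by simp
    then show ?thesis
      by (rule Bochner_Integration.integrable_bound) (use eta_meas[OF that] eta_AE[OF that] in \<open>auto elim!: eventually_mono\<close>)
  qed
  have Vm: "V i j \<in> borel_measurable M" if "i < n" "j < k" for i j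
    unfolding V_def using Wm[OF that] eta_meas[OF that(1)] by measurable
  have V_int: "integrable M (V i j)" if "i < n" "j < k" for i j
  proof -
    have "integrable M (\<lambda>w. 2 * W i j w)" using W_int[OF that] by simp
    then show ?thesis
      by (rule Bochner_Integration.integrable_bound) (use Vm[OF that] eta_AE[OF that(1)] in \<open>auto elim!: eventually_mono simp: V_def abs_mult\<close>)
  qed
  have V_bound: "AE w in M. (V i j w)\<^sup>2 \<le> 4 * (W i j w)\<^sup>2" if "i < n" for i j
    using eta_AE[OF that] by eventually_elim (auto simp: V_def power_mult_distrib)
  have V_int2: "integrable M (\<lambda>w. (V i j w)\<^sup>2)" if "i < n" "j < k" for i j
  proof -
    have "integrable M (\<lambda>w. 4 * (W i j w)\<^sup>2)" using W_int2[OF that] by simp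
    then show ?thesis
      by (rule Bochner_Integration.integrable_bound) (use Vm[OF that] V_bound[OF that(1), of j] in \<open>auto elim!: eventually_mono\<close>)
  qed
  have V_sq: "(\<integral>w. (V i j w)\<^sup>2 \<partial>M) \<le> 4 * (\<integral>z. (om j z)\<^sup>2 \<partial>L)" if "i < n" "j < k" for i j
  proof -
    have "(\<integral>w. (V i j w)\<^sup>2 \<partial>M) \<le> (\<integral>w. 4 * (W i j w)\<^sup>2 \<partial>M)"
      by (rule integral_mono_AE[OF V_int2[OF that]]) (use W_int2[OF that] V_bound[OF that(1)] in auto)
    also have "\<dots> = 4 * (\<integral>z. (om j z)\<^sup>2 \<partial>L)" using W_sq[OF that] by simp
    finally show ?thesis .
  qed
  let ?MM = "(borel \<Otimes>\<^sub>M Sx) \<Otimes>\<^sub>M (borel :: real measure)"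
  let ?Z = "\<lambda>i w. ((Y i w, X i w), eta i w)"
  have V_mean: "(\<integral>w. V i j w \<partial>M) = 0" if "i < n" "j < k" for i j
  proof -
    interpret Lps: prob_space L by (rule Lp)
    interpret Nu: prob_space "distr M borel (eta i)" by (rule prob_space_distr[OF eta_meas[OF that(1)]])
    interpret PS: pair_prob_space L "distr M borel (eta i)" by unfold_locales
    have Zm: "?Z i \<in> measurable M ?MM"
      using data_meas[OF that(1)] eta_meas[OF that(1)] by (rule measurable_Pair)
    have hm: "(\<lambda>u. om j (fst u) * snd u) \<in> borel_measurable ?MM"
      using measurable_compose[OF measurable_fst om_meas'[OF that(2)]] by measurable
    have WE_int: "integrable M (\<lambda>w. W i j w * eta i w)"
      by (rule Bochner_Integration.integrable_bound[OF W_int[OF that]])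
        (use Wm[OF that] eta_meas[OF that(1)] eta_AE[OF that(1)] in \<open>auto elim!: eventually_mono simp: abs_mult\<close>)
    have hint: "integrable (L \<Otimes>\<^sub>M distr M borel (eta i)) (\<lambda>u. om j (fst u) * snd u)"
      using integrable_distr_eq[OF Zm hm] WE_int indep_eta[OF that(1)] unfolding W_def by simp
    have "(\<integral>w. W i j w * eta i w \<partial>M) = (\<integral>u. om j (fst u) * snd u \<partial>(distr M ?MM (?Z i)))"
      using integral_distr[OF Zm hm] unfolding W_def by simp
    also have "\<dots> = (\<integral>u. om j (fst u) * snd u \<partial>(L \<Otimes>\<^sub>M distr M borel (eta i)))"
      using indep_eta[OF that(1)] by simp
    also have "\<dots> = (\<integral>z. (\<integral>e. om j z * e \<partial>distr M borel (eta i)) \<partial>L)"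
      using PS.integral_fst'[OF hint] by simp
    also have "\<dots> = (\<integral>z. om j z * (\<integral>e. e \<partial>distr M borel (eta i)) \<partial>L)"
      by simp
    also have "\<dots> = 0" using om_mean'[OF that(2)] by simp
    finally have WE0: "(\<integral>w. W i j w * eta i w \<partial>M) = 0" .
    have "(\<integral>w. V i j w \<partial>M) = (\<integral>w. W i j w * eta i w + W i j w \<partial>M)"
      unfolding V_def by (simp add: algebra_simps)
    also have "\<dots> = (\<integral>w. W i j w * eta i w \<partial>M) + (\<integral>w. W i j w \<partial>M)"
      by (rule Bochner_Integration.integral_add) (use WE_int W_int[OF that] in auto)
    also have "\<dots> = 0"
      using WE0 W_mean[OF that] by simp
    finally show ?thesis .
  qed
  have W_ind: "indep_var borel (W i j) borel (W l j)" if "i < n" "l < n" "i \<noteq> l" "j < k" for i l j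
  proof -
    have h: "(\<lambda>u. om j (fst u)) \<in> borel_measurable ?MM"
      by (rule measurable_compose[OF measurable_fst om_meas'[OF that(4)]])
    from indep_pair_from_vars[OF indep_obs _ _ that(3) h] that(1,2)
    show ?thesis unfolding W_def by simp
  qed
  have V_ind: "indep_var borel (V i j) borel (V l j)" if "i < n" "l < n" "i \<noteq> l" "j < k" for i l j
  proof -
    have h0: "(\<lambda>u. om j (fst u)) \<in> borel_measurable ?MM"
      by (rule measurable_compose[OF measurable_fst om_meas'[OF that(4)]])
    have h: "(\<lambda>u. (snd u + 1) * om j (fst u)) \<in> borel_measurable ?MM"
      using h0 by measurable
    from indep_pair_from_vars[OF indep_obs _ _ that(3) h] that(1,2)
    show ?thesis unfolding V_def W_def by simp
  qed
  have SW: "integrable M (\<lambda>w. (\<Sum>i<n. W i j w)\<^sup>2) \<and>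
      (\<integral>w. (\<Sum>i<n. W i j w)\<^sup>2 \<partial>M) = real n * (\<integral>z. (om j z)\<^sup>2 \<partial>L)" if j: "j < k" for j
  proof -
    have "integrable M (\<lambda>w. (\<Sum>i<n. W i j w)\<^sup>2) \<and>
      (\<integral>w. (\<Sum>i<n. W i j w)\<^sup>2 \<partial>M) = (\<Sum>i<n. \<integral>w. (W i j w)\<^sup>2 \<partial>M)"
      by (rule sq_sum_indep) (use W_int W_int2 W_mean W_ind j in auto)
    moreover have "(\<Sum>i<n. \<integral>w. (W i j w)\<^sup>2 \<partial>M) = real n * (\<integral>z. (om j z)\<^sup>2 \<partial>L)"
      using W_sq j by simp
    ultimately show ?thesis by simp
  qed
  have SV: "integrable M (\<lambda>w. (\<Sum>i<n. V i j w)\<^sup>2) \<and>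
      (\<integral>w. (\<Sum>i<n. V i j w)\<^sup>2 \<partial>M) \<le> 4 * real n * (\<integral>z. (om j z)\<^sup>2 \<partial>L)" if j: "j < k" for j
  proof -
    have "integrable M (\<lambda>w. (\<Sum>i<n. V i j w)\<^sup>2) \<and>
      (\<integral>w. (\<Sum>i<n. V i j w)\<^sup>2 \<partial>M) = (\<Sum>i<n. \<integral>w. (V i j w)\<^sup>2 \<partial>M)"
      by (rule sq_sum_indep) (use V_int V_int2 V_mean V_ind j in auto)
    moreover have "(\<Sum>i<n. \<integral>w. (V i j w)\<^sup>2 \<partial>M) \<le> (\<Sum>i<n. 4 * (\<integral>z. (om j z)\<^sup>2 \<partial>L))"
      using V_sq j by (intro sum_mono) auto
    ultimately show ?thesis by simp
  qed
  define f where "f w = (\<Sum>j<k. (\<Sum>i<n. V i j w)\<^sup>2) + (\<Sum>j<k. (\<Sum>i<n. W i j w)\<^sup>2)" for w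
  have f_int: "integrable M f"
    unfolding f_def using SV SW by (intro Bochner_Integration.integrable_add Bochner_Integration.integrable_sum) auto
  have Ef: "(\<integral>w. f w \<partial>M) \<le> 5 * real n * D"
  proof -
    have "(\<integral>w. f w \<partial>M) = (\<Sum>j<k. \<integral>w. (\<Sum>i<n. V i j w)\<^sup>2 \<partial>M) + (\<Sum>j<k. \<integral>w. (\<Sum>i<n. W i j w)\<^sup>2 \<partial>M)"
    proof -
      have iA: "integrable M (\<lambda>w. \<Sum>j<k. (\<Sum>i<n. V i j w)\<^sup>2)"
        using SV by (intro Bochner_Integration.integrable_sum) auto
      have iB: "integrable M (\<lambda>w. \<Sum>j<k. (\<Sum>i<n. W i j w)\<^sup>2)"
        using SW by (intro Bochner_Integration.integrable_sum) auto
      have "(\<integral>w. f w \<partial>M) = (\<integral>w. (\<Sum>j<k. (\<Sum>i<n. V i j w)\<^sup>2) \<partial>M) + (\<integral>w. (\<Sum>j<k. (\<Sum>i<n. W i j w)\<^sup>2) \<partial>M)"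
        unfolding f_def by (rule Bochner_Integration.integral_add[OF iA iB])
      also have "(\<integral>w. (\<Sum>j<k. (\<Sum>i<n. V i j w)\<^sup>2) \<partial>M) = (\<Sum>j<k. \<integral>w. (\<Sum>i<n. V i j w)\<^sup>2 \<partial>M)"
        by (rule Bochner_Integration.integral_sum) (use SV in auto)
      also have "(\<integral>w. (\<Sum>j<k. (\<Sum>i<n. W i j w)\<^sup>2) \<partial>M) = (\<Sum>j<k. \<integral>w. (\<Sum>i<n. W i j w)\<^sup>2 \<partial>M)"
        by (rule Bochner_Integration.integral_sum) (use SW in auto)
      finally show ?thesis .
    qed
    also have "\<dots> \<le> (\<Sum>j<k. 4 * real n * (\<integral>z. (om j z)\<^sup>2 \<partial>L)) + (\<Sum>j<k. real n * (\<integral>z. (om j z)\<^sup>2 \<partial>L))"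
      using SV SW by (intro add_mono sum_mono) auto
    also have "\<dots> = 5 * real n * D" unfolding D_def by (simp add: sum_distrib_left[symmetric] algebra_simps)
    finally show ?thesis .
  qed
  have f0: "0 \<le> f w" for w unfolding f_def by (intro add_nonneg_nonneg sum_nonneg) auto
  have bnd0: "0 \<le> 5 * Cc / (c * C\<^sup>2)" using Cc0 c0 by simp
  let ?S = "{w \<in> space M.
             ereal C * xi Xs k p <
             ereal (sqrt (real n) *
               max (vnorm2 (vec k (\<lambda>j. (\<Sum>i<n. (eta i w + 1)
                          * vec_index (omega L k p (Y i w, X i w)) j) / real n)))
                   (vnorm2 (vec k (\<lambda>j. (\<Sum>i<n.
                          vec_index (omega L k p (Y i w, X i w)) j) / real n))))}"
  show ?thesis
  proof (cases "xi Xs k p = \<infinity>")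
    case True
    then have e: "?S = {}" using C0 by auto
    show ?thesis unfolding e using bnd0 by simp
  next
    case False
    from xi_bound[OF Lprems support False] obtain r where
      r: "xi Xs k p = ereal r" "0 \<le> r" "(\<Sum>j<k. \<integral>z. p j (snd z) * p j (snd z) \<partial>L) \<le> r\<^sup>2" by blast
    have kc: "real k * c \<le> r\<^sup>2" using trace_G[OF Lprems] r(3) by linarith
    have kc0: "0 < real k * c" using k1 c0 by simp
    have n0: "n > 0" using n1 by simp
    define t where "t = (C * r)\<^sup>2 * real n"
    have "r \<noteq> 0" using kc kc0 by auto
    then have t0: "0 < t" unfolding t_def using C0 n0 by simp
    have sub: "?S \<subseteq> {w \<in> space M. t \<le> f w}"
    proof safe
      fix w assume w: "w \<in> space M" and lt: "ereal C * xi Xs k p < ereal (sqrt (real n) *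
               max (vnorm2 (vec k (\<lambda>j. (\<Sum>i<n. (eta i w + 1)
                          * vec_index (omega L k p (Y i w, X i w)) j) / real n)))
                   (vnorm2 (vec k (\<lambda>j. (\<Sum>i<n.
                          vec_index (omega L k p (Y i w, X i w)) j) / real n))))"
      have e1: "\<And>j. (\<Sum>i<n. (eta i w + 1) * vec_index (omega L k p (Y i w, X i w)) j)
           = (\<Sum>i<n. V i j w)" by (simp add: V_def W_def om_def)
      have e2: "\<And>j. (\<Sum>i<n. vec_index (omega L k p (Y i w, X i w)) j)
           = (\<Sum>i<n. W i j w)" by (simp add: W_def om_def)
      have lt2: "C * r < sqrt (real n) * max (sqrt (\<Sum>j<k. (\<Sum>i<n. V i j w)\<^sup>2) / real n)
                                        (sqrt (\<Sum>j<k. (\<Sum>i<n. W i j w)\<^sup>2) / real n)"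
        using lt unfolding r(1) vnorm2_vec_div[OF n0] e1 e2 times_ereal.simps(1) less_ereal.simps(1) .
      have "(C * r)\<^sup>2 * real n \<le> (\<Sum>j<k. (\<Sum>i<n. V i j w)\<^sup>2) + (\<Sum>j<k. (\<Sum>i<n. W i j w)\<^sup>2)"
        by (rule key_ineq[OF _ lt2 _ _ n0]) (use C0 r(2) in \<open>auto intro!: sum_nonneg\<close>)
      then show "t \<le> f w" unfolding t_def f_def .
    qed
    have fm: "f \<in> borel_measurable M" using f_int by (rule borel_measurable_integrable)
    have Bset: "{w \<in> space M. t \<le> f w} \<in> sets M" using fm by measurable
    have "measure M ?S \<le> measure M {w \<in> space M. t \<le> f w}"
      by (rule finite_measure_mono[OF sub Bset])
    also have "\<dots> \<le> (\<integral>w. f w \<partial>M) / t"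
      by (rule integral_Markov_inequality_measure[OF f_int _ _ t0, of "space M"]) (use f0 in auto)
    also have "\<dots> \<le> 5 * real n * D / t"
      using Ef t0 by (simp add: divide_right_mono)
    also have "\<dots> = 5 * D / (C\<^sup>2 * r\<^sup>2)"
      unfolding t_def using n0 by (simp add: power_mult_distrib)
    also have "\<dots> \<le> 5 * (real k * Cc) / (C\<^sup>2 * (real k * c))"
    proof (rule frac_le)
      show "0 \<le> 5 * (real k * Cc)" using Cc0 by simp
      show "5 * D \<le> 5 * (real k * Cc)" using DC by simp
      show "0 < C\<^sup>2 * (real k * c)" using kc0 C0 by simp
      show "C\<^sup>2 * (real k * c) \<le> C\<^sup>2 * r\<^sup>2" using kc by (simp add: mult_left_mono)
    qed
    also have "\<dots> = 5 * Cc / (c * C\<^sup>2)"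
      using k1 by (simp add: field_simps)
    finally show ?thesis .
  qed
qed

theorem lemma2:
  fixes M :: "nat \<Rightarrow> 'a measure"
    and Sx :: "'x measure"
    and L :: "nat \<Rightarrow> (real \<times> 'x) measure"
    and Xs :: "nat \<Rightarrow> 'x set"
    and k :: "nat \<Rightarrow> nat"
    and p :: "nat \<Rightarrow> nat \<Rightarrow> 'x \<Rightarrow> real"
    and Y :: "nat \<Rightarrow> nat \<Rightarrow> 'a \<Rightarrow> real"
    and X :: "nat \<Rightarrow> nat \<Rightarrow> 'a \<Rightarrow> 'x"
    and eta :: "nat \<Rightarrow> nat \<Rightarrow> 'a \<Rightarrow> real"
    and b q :: real
    and B :: "nat \<Rightarrow> real"
  assumes prob: "\<And>n. prob_space (M n)"
    and data_meas: "\<And>n i. i < n \<Longrightarrow> (\<lambda>w. (Y n i w, X n i w)) \<in> measurable (M n) (borel \<Otimes>\<^sub>M Sx)"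
    and data_law: "\<And>n i. i < n \<Longrightarrow> distr (M n) (borel \<Otimes>\<^sub>M Sx) (\<lambda>w. (Y n i w, X n i w)) = L n"
    and eta_meas: "\<And>n i. i < n \<Longrightarrow> eta n i \<in> borel_measurable (M n)"
    and eta_rad1: "\<And>n i. i < n \<Longrightarrow> measure (M n) {w \<in> space (M n). eta n i w = 1} = 1/2"
    and eta_rad2: "\<And>n i. i < n \<Longrightarrow> measure (M n) {w \<in> space (M n). eta n i w = -1} = 1/2"
    and indep_obs: "\<And>n. prob_space.indep_vars (M n) (\<lambda>i. (borel \<Otimes>\<^sub>M Sx) \<Otimes>\<^sub>M borel)
                      (\<lambda>i w. ((Y n i w, X n i w), eta n i w)) {..<n}"
    and indep_eta: "\<And>n i. i < n \<Longrightarrow>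
                      distr (M n) ((borel \<Otimes>\<^sub>M Sx) \<Otimes>\<^sub>M borel) (\<lambda>w. ((Y n i w, X n i w), eta n i w))
                      = L n \<Otimes>\<^sub>M distr (M n) borel (eta n i)"
    and support: "\<And>n. AE z in L n. snd z \<in> Xs n"
    and k2: "\<And>n. k n \<ge> 2"
    and p_meas: "\<And>n j. j < k n \<Longrightarrow> p n j \<in> borel_measurable Sx"
    and int_pp: "\<And>n j l. j < k n \<Longrightarrow> l < k n \<Longrightarrow>
                   integrable (L n) (\<lambda>z. p n j (snd z) * p n l (snd z))"
    and int_ww: "\<And>n j l. j < k n \<Longrightarrow> l < k n \<Longrightarrow>
                   integrable (L n) (\<lambda>z. vec_index (omega (L n) (k n) (p n) z) j
                                        * vec_index (omega (L n) (k n) (p n) z) l)"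
    and eig_a: "\<exists>c C. 0 < c \<and> (\<forall>n e. (eigenvalue (Omega (L n) (k n) (p n)) e
                                        \<or> eigenvalue (gram (L n) (k n) (p n)) e)
                                       \<longrightarrow> c \<le> e \<and> e \<le> C)"
    and b_pos: "b > 0"
    and q_ge: "q \<ge> 4"
    and B_ge: "\<And>n. B n \<ge> 1"
    and Y2: "\<And>n. integrable (L n) (\<lambda>z. (fst z)\<^sup>2)"
    and mom_low: "\<And>n j. j < k n \<Longrightarrow>
        (\<integral>\<^sup>+ z. ennreal ((row (inv_sqrt_mat (Omega (L n) (k n) (p n))) j
                              \<bullet> omega (L n) (k n) (p n) z)\<^sup>2) \<partial>L n) \<ge> ennreal b"
    and mom_up: "\<And>n j \<kappa>. j < k n \<Longrightarrow> \<kappa> \<in> {1, 2} \<Longrightarrow>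
        (\<integral>\<^sup>+ z. ennreal (\<bar>row (inv_sqrt_mat (Omega (L n) (k n) (p n))) j
                              \<bullet> omega (L n) (k n) (p n) z\<bar> ^ (2 + \<kappa>)) \<partial>L n) \<le> ennreal (B n ^ \<kappa>)"
    and mom_q: "\<And>n. (\<integral>\<^sup>+ z. ennreal ((Max ((\<lambda>j. \<bar>row (inv_sqrt_mat (Omega (L n) (k n) (p n))) j
                              \<bullet> omega (L n) (k n) (p n) z\<bar>) ` {..<k n})) powr q) \<partial>L n)
                   \<le> ennreal (B n powr q)"
    and rate1: "(\<lambda>n. (B n)\<^sup>2 * (ln (real (n * k n))) ^ 7 / real n) \<longlonglongrightarrow> 0"
    and rate2: "(\<lambda>n. (B n)\<^sup>2 * (ln (real (n * k n))) ^ 3 / real n powr (1 - 2 / q)) \<longlonglongrightarrow> 0"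
  shows "\<forall>\<epsilon>>0. \<exists>C>0. \<exists>N. \<forall>n\<ge>N.
           measure (M n) {w \<in> space (M n).
             ereal C * xi (Xs n) (k n) (p n) <
             ereal (sqrt (real n) *
               max (vnorm2 (vec (k n) (\<lambda>j. (\<Sum>i<n. (eta n i w + 1)
                          * vec_index (omega (L n) (k n) (p n) (Y n i w, X n i w)) j) / real n)))
                   (vnorm2 (vec (k n) (\<lambda>j. (\<Sum>i<n.
                          vec_index (omega (L n) (k n) (p n) (Y n i w, X n i w)) j) / real n))))}
           < \<epsilon>"
proof (intro allI impI)
  fix \<epsilon> :: real assume e0: "\<epsilon> > 0"
  obtain c Cc where c0: "0 < c" and eig: "\<And>n e. eigenvalue (Omega (L n) (k n) (p n)) e
      \<or> eigenvalue (gram (L n) (k n) (p n)) e \<Longrightarrow> c \<le> e \<and> e \<le> Cc"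
    using eig_a by blast
  define C where "C = sqrt (5 * \<bar>Cc\<bar> / (c * \<epsilon>)) + 1"
  have nn: "0 \<le> 5 * \<bar>Cc\<bar> / (c * \<epsilon>)" using c0 e0 by (intro divide_nonneg_pos) auto
  have "0 \<le> sqrt (5 * \<bar>Cc\<bar> / (c * \<epsilon>))" using nn by simp
  then have C0: "C > 0" unfolding C_def by linarith
  have "5 * \<bar>Cc\<bar> / (c * \<epsilon>) < C\<^sup>2"
  proof -
    have "5 * \<bar>Cc\<bar> / (c * \<epsilon>) = (sqrt (5 * \<bar>Cc\<bar> / (c * \<epsilon>)))\<^sup>2"
      using nn by simp
    also have "\<dots> < C\<^sup>2" unfolding C_def using nn by (intro power_strict_mono) auto
    finally show ?thesis .
  qed
  then have "5 * \<bar>Cc\<bar> < C\<^sup>2 * (c * \<epsilon>)" using c0 e0 by (simp add: pos_divide_less_eq)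
  then have bnd: "5 * Cc / (c * C\<^sup>2) < \<epsilon>"
    using c0 C0 by (simp add: pos_divide_less_eq algebra_simps)
  show "\<exists>C>0. \<exists>N. \<forall>n\<ge>N.
           measure (M n) {w \<in> space (M n).
             ereal C * xi (Xs n) (k n) (p n) <
             ereal (sqrt (real n) *
               max (vnorm2 (vec (k n) (\<lambda>j. (\<Sum>i<n. (eta n i w + 1)
                          * vec_index (omega (L n) (k n) (p n) (Y n i w, X n i w)) j) / real n)))
                   (vnorm2 (vec (k n) (\<lambda>j. (\<Sum>i<n.
                          vec_index (omega (L n) (k n) (p n) (Y n i w, X n i w)) j) / real n))))}
           < \<epsilon>"
  proof (intro exI[of _ C] conjI C0 exI[of _ 1] allI impI)
    fix n :: nat assume n1: "1 \<le> n"
    have k1: "k n \<ge> 1" using k2[of n] by simp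
    have "measure (M n) {w \<in> space (M n).
             ereal C * xi (Xs n) (k n) (p n) <
             ereal (sqrt (real n) *
               max (vnorm2 (vec (k n) (\<lambda>j. (\<Sum>i<n. (eta n i w + 1)
                          * vec_index (omega (L n) (k n) (p n) (Y n i w, X n i w)) j) / real n)))
                   (vnorm2 (vec (k n) (\<lambda>j. (\<Sum>i<n.
                          vec_index (omega (L n) (k n) (p n) (Y n i w, X n i w)) j) / real n))))}
         \<le> 5 * Cc / (c * C\<^sup>2)"
      by (rule per_n[OF prob n1 data_meas data_law eta_meas eta_rad1 eta_rad2 indep_obs indep_eta
            support k1 p_meas int_pp int_ww Y2 eig c0 C0])
    then show "measure (M n) {w \<in> space (M n).
             ereal C * xi (Xs n) (k n) (p n) <
             ereal (sqrt (real n) *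
               max (vnorm2 (vec (k n) (\<lambda>j. (\<Sum>i<n. (eta n i w + 1)
                          * vec_index (omega (L n) (k n) (p n) (Y n i w, X n i w)) j) / real n)))
                   (vnorm2 (vec (k n) (\<lambda>j. (\<Sum>i<n.
                          vec_index (omega (L n) (k n) (p n) (Y n i w, X n i w)) j) / real n))))}
           < \<epsilon>" using bnd by linarith
  qed
qed

end
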